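(* If $(X,\asymp,B)$ is a prelength space, then $(\mathfrak{C}(X),\asymp,B')$ is a prelength space.
   Context: $\mathbb{Q}^+$ denotes the strictly positive rationals; all $\varepsilon,\delta$ (with indices) range over $\mathbb{Q}^+$. A metric space is a triple $(X,\asymp,B)$ where $\asymp$ is an equivalence relation on $X$ and $B$ assigns to each $\varepsilon\in\mathbb{Q}^+$ a binary relation $B_\varepsilon$ on $X$ respecting $\asymp$, such that: (1) each $B_\varepsilon$ is reflexive; (2) each $B_\varepsilon$ is symmetric; (3) if $B_{\varepsilon_1}(a,b)$ and $B_{\varepsilon_2}(b,c)$ then $B_{\varepsilon_1+\varepsilon_2}(a,c)$; (4) if $B_{\varepsilon+\delta}(a,b)$ for all $\delta$, then $B_\varepsilon(a,b)$; (5) if $B_\varepsilon(a,b)$ for all $\varepsilon$, then $a\asymp b$. A prelength space is a metric space such that for all $a,b,\varepsilon,\delta_1,\delta_2$ with $\varepsilon<\delta_1+\delta_2$ and $B_\varepsilon(a,b)$ there exists $c$ with $B_{\delta_1}(a,c)$ and $B_{\delta_2}(c,b)$. A regular function over $X$ is a function $x:\mathbb{Q}^+\to X$ such that $B_{\varepsilon_1+\varepsilon_2}(x(\varepsilon_1),x(\varepsilon_2))$ for all $\varepsilon_1,\varepsilon_2$. $\mathfrak{C}(X)$ is the set of regular functions over $X$; on it, $x\asymp y$ means $B_{2\varepsilon}(x(\varepsilon),y(\varepsilon))$ for all $\varepsilon$, and $B'_\varepsilon(x,y)$ means $B_{\varepsilon+\delta_1+\delta_2}(x(\delta_1),y(\delta_2))$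 for all $\delta_1,\delta_2$. *)

theory Defs
  imports Complex_Main
begin

text \<open>A metric space (X, eq, B) in the sense of the paper: X is a carrier set,
  eq an equivalence relation on X, and B e a binary relation on X for each
  strictly positive rational e (values of B at non-positive e are irrelevant).\<close>

definition metric_space_Q :: "'a set \<Rightarrow> ('a \<Rightarrow> 'a \<Rightarrow> bool) \<Rightarrow> (rat \<Rightarrow> 'a \<Rightarrow> 'a \<Rightarrow> bool) \<Rightarrow> bool" where
  "metric_space_Q X eq B \<longleftrightarrow>
     (\<forall>a\<in>X. eq a a) \<and>
     (\<forall>a\<in>X. \<forall>b\<in>X. eq a b \<longrightarrow> eq b a) \<and>
     (\<forall>a\<in>X. \<forall>b\<in>X. \<forall>c\<in>X. eq a b \<longrightarrow> eq b c \<longrightarrow> eq a c) \<and>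
     (\<forall>e>0. \<forall>a\<in>X. \<forall>a'\<in>X. \<forall>b\<in>X. \<forall>b'\<in>X.
        eq a a' \<longrightarrow> eq b b' \<longrightarrow> B e a b \<longrightarrow> B e a' b') \<and>
     (\<forall>e>0. \<forall>a\<in>X. B e a a) \<and>
     (\<forall>e>0. \<forall>a\<in>X. \<forall>b\<in>X. B e a b \<longrightarrow> B e b a) \<and>
     (\<forall>e1>0. \<forall>e2>0. \<forall>a\<in>X. \<forall>b\<in>X. \<forall>c\<in>X.
        B e1 a b \<longrightarrow> B e2 b c \<longrightarrow> B (e1 + e2) a c) \<and>
     (\<forall>e>0. \<forall>a\<in>X. \<forall>b\<in>X. (\<forall>d>0. B (e + d) a b) \<longrightarrow> B e a b) \<and>
     (\<forall>a\<in>X. \<forall>b\<in>X. (\<forall>e>0. B e a b) \<longrightarrow> eq a b)"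

definition prelength_space_Q :: "'a set \<Rightarrow> ('a \<Rightarrow> 'a \<Rightarrow> bool) \<Rightarrow> (rat \<Rightarrow> 'a \<Rightarrow> 'a \<Rightarrow> bool) \<Rightarrow> bool" where
  "prelength_space_Q X eq B \<longleftrightarrow> metric_space_Q X eq B \<and>
     (\<forall>a\<in>X. \<forall>b\<in>X. \<forall>e>0. \<forall>d1>0. \<forall>d2>0.
        e < d1 + d2 \<longrightarrow> B e a b \<longrightarrow> (\<exists>c\<in>X. B d1 a c \<and> B d2 c b))"

text \<open>Regular functions Q+ -> X (only values at positive arguments matter).\<close>

definition regular_fun :: "'a set \<Rightarrow> (rat \<Rightarrow> 'a \<Rightarrow> 'a \<Rightarrow> bool) \<Rightarrow> (rat \<Rightarrow> 'a) \<Rightarrow> bool" where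
  "regular_fun X B x \<longleftrightarrow> (\<forall>e>0. x e \<in> X) \<and>
     (\<forall>e1>0. \<forall>e2>0. B (e1 + e2) (x e1) (x e2))"

definition completion :: "'a set \<Rightarrow> (rat \<Rightarrow> 'a \<Rightarrow> 'a \<Rightarrow> bool) \<Rightarrow> (rat \<Rightarrow> 'a) set" where
  "completion X B = {x. regular_fun X B x}"

definition completion_eq :: "(rat \<Rightarrow> 'a \<Rightarrow> 'a \<Rightarrow> bool) \<Rightarrow> (rat \<Rightarrow> 'a) \<Rightarrow> (rat \<Rightarrow> 'a) \<Rightarrow> bool" where
  "completion_eq B x y \<longleftrightarrow> (\<forall>e>0. B (2 * e) (x e) (y e))"

definition completion_ball :: "(rat \<Rightarrow> 'a \<Rightarrow> 'a \<Rightarrow> bool) \<Rightarrow> rat \<Rightarrow> (rat \<Rightarrow> 'a) \<Rightarrow> (rat \<Rightarrow> 'a) \<Rightarrow> bool" where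
  "completion_ball B e x y \<longleftrightarrow> (\<forall>d1>0. \<forall>d2>0. B (e + d1 + d2) (x d1) (y d2))"

end

theory Submission
  imports Defs
begin

lemma req: "P (e::rat) \<Longrightarrow> e = e' \<Longrightarrow> P e'" by simp

context
  fixes X :: "'a set" and eq :: "'a \<Rightarrow> 'a \<Rightarrow> bool" and B :: "rat \<Rightarrow> 'a \<Rightarrow> 'a \<Rightarrow> bool"
  assumes M: "metric_space_Q X eq B"
begin

lemma Bref: "e > 0 \<Longrightarrow> a \<in> X \<Longrightarrow> B e a a"
  using M unfolding metric_space_Q_def by blast
lemma Bsym: "e > 0 \<Longrightarrow> a \<in> X \<Longrightarrow> b \<in> X \<Longrightarrow> B e a b \<Longrightarrow> B e b a"
  using M unfolding metric_space_Q_def by blast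
lemma Btri: "e1 > 0 \<Longrightarrow> e2 > 0 \<Longrightarrow> a \<in> X \<Longrightarrow> b \<in> X \<Longrightarrow> c \<in> X \<Longrightarrow> B e1 a b \<Longrightarrow> B e2 b c \<Longrightarrow> B (e1+e2) a c"
  using M unfolding metric_space_Q_def by blast
lemma Bclosed: "e > 0 \<Longrightarrow> a \<in> X \<Longrightarrow> b \<in> X \<Longrightarrow> (\<And>d. d > 0 \<Longrightarrow> B (e+d) a b) \<Longrightarrow> B e a b"
  using M unfolding metric_space_Q_def by blast

lemma Bmono:
  assumes "e > 0" "e \<le> e'" "a \<in> X" "b \<in> X" "B e a b"
  shows "B e' a b"
proof (cases "e = e'")
  case True then show ?thesis using assms by simp
next
  case False
  then have "B (e + (e'-e)) a b" using Btri[of e "e'-e" a b b] Bref[of "e'-e" b] assms by auto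
  then show ?thesis by simp
qed

lemma Btri3: "e1 > 0 \<Longrightarrow> e2 > 0 \<Longrightarrow> e3 > 0 \<Longrightarrow> a \<in> X \<Longrightarrow> b \<in> X \<Longrightarrow> c \<in> X \<Longrightarrow> d \<in> X
  \<Longrightarrow> B e1 a b \<Longrightarrow> B e2 b c \<Longrightarrow> B e3 c d \<Longrightarrow> B (e1+e2+e3) a d"
  by (metis Btri add_pos_pos)

lemma reg_in: "regular_fun X B x \<Longrightarrow> a > 0 \<Longrightarrow> x a \<in> X"
  unfolding regular_fun_def by blast
lemma reg_B: "regular_fun X B x \<Longrightarrow> a > 0 \<Longrightarrow> b > 0 \<Longrightarrow> B (a+b) (x a) (x b)"
  unfolding regular_fun_def by blast

lemma eq_B:
  assumes x: "regular_fun X B x" and y: "regular_fun X B y" and E: "completion_eq B x y"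
    and a: "a > 0" and b: "b > 0"
  shows "B (a+b) (x a) (y b)"
proof (rule Bclosed)
  show "a + b > 0" using a b by simp
  show "x a \<in> X" "y b \<in> X" using reg_in x y a b by auto
  fix d :: rat assume d: "d > 0"
  define t where "t = d/4"
  have t: "t > 0" using d by (simp add: t_def)
  have 1: "B (a+t) (x a) (x t)" using reg_B[OF x a t] .
  have 2: "B (2*t) (x t) (y t)" using E t unfolding completion_eq_def by blast
  have 3: "B (t+b) (y t) (y b)" using reg_B[OF y t b] .
  have "B (a+t+2*t+(t+b)) (x a) (y b)"
    by (rule Btri3[OF _ _ _ _ _ _ _ 1 2 3]) (use a b t x y reg_in in auto)
  moreover have "a+t+2*t+(t+b) = a+b+d" by (simp add: t_def field_simps)
  ultimately show "B (a+b+d) (x a) (y b)" by (simp only:)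
qed

lemma eq_sym: "completion_eq B x y \<Longrightarrow> regular_fun X B x \<Longrightarrow> regular_fun X B y \<Longrightarrow> completion_eq B y x"
  unfolding completion_eq_def using Bsym reg_in by simp

lemma eq_trans:
  assumes x: "regular_fun X B x" and y: "regular_fun X B y" and z: "regular_fun X B z"
    and E1: "completion_eq B x y" and E2: "completion_eq B y z"
  shows "completion_eq B x z"
  unfolding completion_eq_def
proof (intro allI impI)
  fix e :: rat assume e: "e > 0"
  show "B (2*e) (x e) (z e)"
  proof (rule Bclosed)
    show "2*e > 0" using e by simp
    show "x e \<in> X" "z e \<in> X" using reg_in x z e by auto
    fix d :: rat assume d: "d > 0"
    define t where "t = d/2"
    have t: "t > 0" using d by (simp add: t_def)
    have "B ((e+t)+(t+e)) (x e) (z e)"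
      apply (rule Btri[where b="y t"])
      using e t x y z reg_in eq_B E1 E2 by auto
    moreover have "(e+t)+(t+e) = 2*e+d" by (simp add: t_def field_simps)
    ultimately show "B (2*e+d) (x e) (z e)" by simp
  qed
qed

lemma ball_resp:
  assumes x: "regular_fun X B x" and y: "regular_fun X B y"
    and x': "regular_fun X B x'" and y': "regular_fun X B y'"
    and E1: "completion_eq B x x'" and E2: "completion_eq B y y'"
    and Bl: "completion_ball B e x y" and e: "e > 0"
  shows "completion_ball B e x' y'"
  unfolding completion_ball_def
proof (intro allI impI)
  fix a b :: rat assume a: "a > 0" and b: "b > 0"
  show "B (e+a+b) (x' a) (y' b)"
  proof (rule Bclosed)
    show "e+a+b > 0" using e a b by simp
    show "x' a \<in> X" "y' b \<in> X" using reg_in x' y' a b by auto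
    fix d :: rat assume d: "d > 0"
    define t where "t = d/4"
    have t: "t > 0" using d by (simp add: t_def)
    have E1': "completion_eq B x' x" using eq_sym E1 x x' by blast
    have 1: "B (a+t) (x' a) (x t)" using eq_B[OF x' x E1' a t] .
    have 2: "B (e+t+t) (x t) (y t)" using Bl t unfolding completion_ball_def by blast
    have 3: "B (t+b) (y t) (y' b)" using eq_B[OF y y' E2 t b] .
    have "B ((a+t)+(e+t+t)+(t+b)) (x' a) (y' b)"
      by (rule Btri3[OF _ _ _ _ _ _ _ 1 2 3]) (use e a b t x y x' y' reg_in in auto)
    moreover have "(a+t)+(e+t+t)+(t+b) = e+a+b+d" by (simp add: t_def field_simps)
    ultimately show "B (e+a+b+d) (x' a) (y' b)" by (simp only:)
  qed
qed

lemma ball_refl: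
  assumes x: "regular_fun X B x" and e: "e > 0"
  shows "completion_ball B e x x"
  unfolding completion_ball_def
proof (intro allI impI)
  fix a b :: rat assume a: "a > 0" and b: "b > 0"
  show "B (e+a+b) (x a) (x b)"
    apply (rule Bmono[of "a+b"])
    using a b e x reg_in reg_B by auto
qed

lemma ball_sym:
  assumes x: "regular_fun X B x" and y: "regular_fun X B y" and e: "e > 0"
    and Bl: "completion_ball B e x y"
  shows "completion_ball B e y x"
  unfolding completion_ball_def
proof (intro allI impI)
  fix a b :: rat assume a: "a > 0" and b: "b > 0"
  have "B (e+b+a) (x b) (y a)" using Bl a b unfolding completion_ball_def by blast
  then have "B (e+b+a) (y a) (x b)" using Bsym a b e x y reg_in by simp
  then show "B (e+a+b) (y a) (x b)" by (rule req) linarith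
qed

lemma ball_tri:
  assumes x: "regular_fun X B x" and y: "regular_fun X B y" and z: "regular_fun X B z"
    and e1: "e1 > 0" and e2: "e2 > 0"
    and B1: "completion_ball B e1 x y" and B2: "completion_ball B e2 y z"
  shows "completion_ball B (e1+e2) x z"
  unfolding completion_ball_def
proof (intro allI impI)
  fix a b :: rat assume a: "a > 0" and b: "b > 0"
  show "B (e1+e2+a+b) (x a) (z b)"
  proof (rule Bclosed)
    show "e1+e2+a+b > 0" using e1 e2 a b by simp
    show "x a \<in> X" "z b \<in> X" using reg_in x z a b by auto
    fix d :: rat assume d: "d > 0"
    define t where "t = d/2"
    have t: "t > 0" using d by (simp add: t_def)
    have "B ((e1+a+t)+(e2+t+b)) (x a) (z b)"
      apply (rule Btri[where b="y t"])
      using e1 e2 a b t x y z reg_in B1 B2 unfolding completion_ball_def by auto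
    moreover have "(e1+a+t)+(e2+t+b) = e1+e2+a+b+d" by (simp add: t_def field_simps)
    ultimately show "B (e1+e2+a+b+d) (x a) (z b)" by simp
  qed
qed

lemma ball_closed:
  assumes x: "regular_fun X B x" and y: "regular_fun X B y" and e: "e > 0"
    and H: "\<forall>d>0. completion_ball B (e+d) x y"
  shows "completion_ball B e x y"
  unfolding completion_ball_def
proof (intro allI impI)
  fix a b :: rat assume a: "a > 0" and b: "b > 0"
  show "B (e+a+b) (x a) (y b)"
  proof (rule Bclosed)
    show "e+a+b > 0" using e a b by simp
    show "x a \<in> X" "y b \<in> X" using reg_in x y a b by auto
    fix d :: rat assume d: "d > 0"
    have "B (e+d+a+b) (x a) (y b)" using H d a b unfolding completion_ball_def by blast
    then show "B (e+a+b+d) (x a) (y b)" by (rule req) linarith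
  qed
qed

lemma ball_eq:
  assumes x: "regular_fun X B x" and y: "regular_fun X B y"
    and H: "\<forall>e>0. completion_ball B e x y"
  shows "completion_eq B x y"
  unfolding completion_eq_def
proof (intro allI impI)
  fix e :: rat assume e: "e > 0"
  show "B (2*e) (x e) (y e)"
  proof (rule Bclosed)
    show "2*e > 0" using e by simp
    show "x e \<in> X" "y e \<in> X" using reg_in x y e by auto
    fix d :: rat assume d: "d > 0"
    have "B (d+e+e) (x e) (y e)" using H d e unfolding completion_ball_def by blast
    then show "B (2*e+d) (x e) (y e)" by (rule req) linarith
  qed
qed

end

lemma completion_metric:
  assumes M: "metric_space_Q X eq B"
  shows "metric_space_Q (completion X B) (completion_eq B) (completion_ball B)"
  unfolding metric_space_Q_def completion_def mem_Collect_eq Ball_def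
  apply (intro conjI allI impI)
  subgoal for a unfolding completion_eq_def
    by (intro allI impI, rule req[where P="\<lambda>e'. B e' _ _", OF reg_B[OF M]]) simp_all
  subgoal by (rule eq_sym[OF M]; assumption)
  subgoal by (rule eq_trans[OF M]; assumption)
  subgoal by (rule ball_resp[OF M]; assumption)
  subgoal by (rule ball_refl[OF M]; assumption)
  subgoal by (rule ball_sym[OF M]; assumption)
  subgoal by (rule ball_tri[OF M]; assumption)
  subgoal by (rule ball_closed[OF M]; assumption)
  subgoal by (rule ball_eq[OF M]; assumption)
  done

theorem theorem9:
  fixes X :: "'a set" and eq :: "'a \<Rightarrow> 'a \<Rightarrow> bool" and B :: "rat \<Rightarrow> 'a \<Rightarrow> 'a \<Rightarrow> bool"
  assumes "prelength_space_Q X eq B"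
  shows "prelength_space_Q (completion X B) (completion_eq B) (completion_ball B)"
proof -
  have M: "metric_space_Q X eq B" and P: "\<forall>a\<in>X. \<forall>b\<in>X. \<forall>e>0. \<forall>d1>0. \<forall>d2>0.
        e < d1 + d2 \<longrightarrow> B e a b \<longrightarrow> (\<exists>c\<in>X. B d1 a c \<and> B d2 c b)"
    using assms unfolding prelength_space_Q_def by auto
  have "\<exists>z\<in>completion X B. completion_ball B d1 x z \<and> completion_ball B d2 z y"
    if x: "regular_fun X B x" and y: "regular_fun X B y" and e: "e > 0" and d1: "d1 > 0"
      and d2: "d2 > 0" and lt: "e < d1 + d2" and Bl: "completion_ball B e x y" for x y e d1 d2
  proof -
    define w where "w = min ((d1+d2-e)/5) (min (d1/2) (d2/2))"
    have w: "w > 0" "w < d1" "w < d2" "e + 2*w < (d1-w) + (d2-w)"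
    proof -
      have "w \<le> (d1+d2-e)/5" "w \<le> d1/2" "w \<le> d2/2" unfolding w_def
        by (simp_all only: min.bounded_iff min.cobounded1 min_le_iff_disj order_refl simp_thms)
      then have "5*w \<le> d1+d2-e" "2*w \<le> d1" "2*w \<le> d2" by (simp_all add: field_simps)
      moreover have "w > 0" unfolding w_def using e d1 d2 lt by simp
      ultimately show "w > 0" "w < d1" "w < d2" "e + 2*w < (d1-w) + (d2-w)"
        using e d1 d2 lt by linarith+
    qed
    have xw: "x w \<in> X" and yw: "y w \<in> X" using reg_in[OF M] x y w by auto
    have "B (e+w+w) (x w) (y w)" using Bl w unfolding completion_ball_def by blast
    then have "B (e+2*w) (x w) (y w)" by (rule req) linarith
    then obtain c where c: "c \<in> X" "B (d1-w) (x w) c" "B (d2-w) c (y w)"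
    proof -
      have "e + 2*w > 0" "d1 - w > 0" "d2 - w > 0" using e w by auto
      then show ?thesis using that P xw yw w(4) \<open>B (e+2*w) (x w) (y w)\<close> by blast
    qed
    define z where "z = (\<lambda>_::rat. c)"
    have z: "regular_fun X B z" unfolding regular_fun_def z_def using c Bref[OF M] by auto
    have "completion_ball B d1 x z" unfolding completion_ball_def
    proof (intro allI impI)
      fix a b :: rat assume a: "a > 0" and b: "b > 0"
      have "B ((a+w)+(d1-w)) (x a) c"
        apply (rule Btri[OF M, where b="x w"])
        using a w c x reg_in[OF M] reg_B[OF M] by auto
      then have "B (d1+a) (x a) c" by (rule req) linarith
      then show "B (d1+a+b) (x a) (z b)" unfolding z_def
        using Bmono[OF M, of "d1+a" "d1+a+b"] a b d1 c x reg_in[OF M] by auto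
    qed
    moreover have "completion_ball B d2 z y" unfolding completion_ball_def
    proof (intro allI impI)
      fix a b :: rat assume a: "a > 0" and b: "b > 0"
      have "B ((d2-w)+(w+b)) c (y b)"
        apply (rule Btri[OF M, where b="y w"])
        using b w c y reg_in[OF M] reg_B[OF M] by auto
      then have "B (d2+b) c (y b)" by (rule req) linarith
      then show "B (d2+a+b) (z a) (y b)" unfolding z_def
        using Bmono[OF M, of "d2+b" "d2+a+b"] a b d2 c y reg_in[OF M] by auto
    qed
    ultimately show ?thesis using z unfolding completion_def by blast
  qed
  then have "\<forall>a\<in>completion X B. \<forall>b\<in>completion X B. \<forall>e>0. \<forall>d1>0. \<forall>d2>0.
        e < d1 + d2 \<longrightarrow> completion_ball B e a b \<longrightarrow>
        (\<exists>c\<in>completion X B. completion_ball B d1 a c \<and> completion_ball B d2 c b)"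
    unfolding completion_def mem_Collect_eq by blast
  with completion_metric[OF M] show ?thesis
    unfolding prelength_space_Q_def by (rule conjI)
qed

end
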